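(* Let $P\in\{0,1\}^{k\times\ell}$ be a pattern with a row $r\in[k]$ and a column $c\in[\ell]$ such that $\mathrm{supp}(P)\subseteq(\{r\}\times[\ell])\cup([k]\times[c,\ell])$. Then every 1-entry of $P$ in $\{r\}\times[c]$ is row-bounding.
   Context: All matrices are binary; rows numbered top to bottom, columns left to right; $(i,j)$ is the entry in row $i$, column $j$; $\mathrm{supp}$ is the set of 1-entries; $[a,b]=\{a,\dots,b\}$, $[n]=[1,n]$. $M\Delta f$ is $M$ with the value of entry $f$ switched. An embedding of $P\in\{0,1\}^{k\times\ell}$ into $M\in\{0,1\}^{m\times n}$ is a map $\phi:[k]\times[\ell]\to[m]\times[n]$ sending 1-entries to 1-entries and such that if $e_1=(i_1,j_1)$, $e_2=(i_2,j_2)$ map to $(i_1^*,j_1^* )$, $(i_2^*,j_2^* )$, then $i_1<i_2\Rightarrow i_1^*<i_2^*$ and $j_1<j_2\Rightarrow j_1^*<j_2^*$. $M$ avoids $P$ if no embedding exists; $\mathrm{Av}(P)$ is the set of $P$-avoiding matrices. For a 1-entry $e$ of $P$ and $M\in\mathrm{Av}(P)$, a 0-entry $f$ of $M$ is critical for $e$ if some embedding of $P$ into $M\Delta f$ maps $e$ to $f$; a horizontal 0-run (maximal run of consecutive 0-entries in a row) is critical for $e$ if it contains a 0-entry critical for $e$. The 1-entry $e$ is row-bounding if there is a constant $K$ such that for every $M\in\mathrm{Av}(P)$ every row of $M$ contains at most $K$ horizontal 0-runs critical for $e$. *)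

theory Defs
  imports Main
begin

text \<open>A binary matrix of size m x n is represented by a function M :: nat \<times> nat \<Rightarrow> bool
  (True = 1-entry), of which only the entries in {1..m} \<times> {1..n} are relevant.
  Rows and columns are numbered from 1.\<close>

type_synonym bmat = "nat \<times> nat \<Rightarrow> bool"

definition embedding ::
  "nat \<Rightarrow> nat \<Rightarrow> bmat \<Rightarrow> nat \<Rightarrow> nat \<Rightarrow> bmat \<Rightarrow> (nat \<times> nat \<Rightarrow> nat \<times> nat) \<Rightarrow> bool" where
  "embedding k l P m n M \<phi> \<longleftrightarrow>
     (\<forall>e \<in> {1..k} \<times> {1..l}. \<phi> e \<in> {1..m} \<times> {1..n}) \<and>
     (\<forall>e \<in> {1..k} \<times> {1..l}. P e \<longrightarrow> M (\<phi> e)) \<and>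
     (\<forall>e1 \<in> {1..k} \<times> {1..l}. \<forall>e2 \<in> {1..k} \<times> {1..l}.
        (fst e1 < fst e2 \<longrightarrow> fst (\<phi> e1) < fst (\<phi> e2)) \<and>
        (snd e1 < snd e2 \<longrightarrow> snd (\<phi> e1) < snd (\<phi> e2)))"

definition avoids :: "nat \<Rightarrow> nat \<Rightarrow> bmat \<Rightarrow> nat \<Rightarrow> nat \<Rightarrow> bmat \<Rightarrow> bool" where
  "avoids k l P m n M \<longleftrightarrow> \<not> (\<exists>\<phi>. embedding k l P m n M \<phi>)"

definition flip :: "bmat \<Rightarrow> nat \<times> nat \<Rightarrow> bmat" where
  "flip M f = M(f := \<not> M f)"

definition critical_entry ::
  "nat \<Rightarrow> nat \<Rightarrow> bmat \<Rightarrow> nat \<times> nat \<Rightarrow> nat \<Rightarrow> nat \<Rightarrow> bmat \<Rightarrow> nat \<times> nat \<Rightarrow> bool" where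
  "critical_entry k l P e m n M f \<longleftrightarrow>
     f \<in> {1..m} \<times> {1..n} \<and> \<not> M f \<and>
     (\<exists>\<phi>. embedding k l P m n (flip M f) \<phi> \<and> \<phi> e = f)"

definition hrun :: "nat \<Rightarrow> nat \<Rightarrow> bmat \<Rightarrow> nat \<Rightarrow> nat \<Rightarrow> nat \<Rightarrow> bool" where
  "hrun m n M i a b \<longleftrightarrow>
     i \<in> {1..m} \<and> 1 \<le> a \<and> a \<le> b \<and> b \<le> n \<and>
     (\<forall>j \<in> {a..b}. \<not> M (i, j)) \<and>
     (a = 1 \<or> M (i, a - 1)) \<and> (b = n \<or> M (i, b + 1))"

definition critical_runs ::
  "nat \<Rightarrow> nat \<Rightarrow> bmat \<Rightarrow> nat \<times> nat \<Rightarrow> nat \<Rightarrow> nat \<Rightarrow> bmat \<Rightarrow> nat \<Rightarrow> (nat \<times> nat) set" where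
  "critical_runs k l P e m n M i =
     {(a, b). hrun m n M i a b \<and> (\<exists>j \<in> {a..b}. critical_entry k l P e m n M (i, j))}"

definition row_bounding :: "nat \<Rightarrow> nat \<Rightarrow> bmat \<Rightarrow> nat \<times> nat \<Rightarrow> bool" where
  "row_bounding k l P e \<longleftrightarrow>
     (\<exists>K::nat. \<forall>m n M. avoids k l P m n M \<longrightarrow>
        (\<forall>i \<in> {1..m}. card (critical_runs k l P e m n M i) \<le> K))"

end

theory Submission
  imports Defs
begin

lemma emb_intro:
  assumes R1: "\<And>a b. a \<in> {1..k} \<Longrightarrow> b \<in> {1..l} \<Longrightarrow> \<psi> (a,b) \<in> {1..m} \<times> {1..n}"
    and R2: "\<And>a b. a \<in> {1..k} \<Longrightarrow> b \<in> {1..l} \<Longrightarrow> P (a,b) \<Longrightarrow> M (\<psi> (a,b))"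
    and R3: "\<And>a1 b1 a2 b2. a1 \<in> {1..k} \<Longrightarrow> b1 \<in> {1..l} \<Longrightarrow> a2 \<in> {1..k} \<Longrightarrow> b2 \<in> {1..l}
              \<Longrightarrow> a1 < a2 \<Longrightarrow> fst (\<psi> (a1,b1)) < fst (\<psi> (a2,b2))"
    and R4: "\<And>a1 b1 a2 b2. a1 \<in> {1..k} \<Longrightarrow> b1 \<in> {1..l} \<Longrightarrow> a2 \<in> {1..k} \<Longrightarrow> b2 \<in> {1..l}
              \<Longrightarrow> b1 < b2 \<Longrightarrow> snd (\<psi> (a1,b1)) < snd (\<psi> (a2,b2))"
  shows "embedding k l P m n M \<psi>"
  unfolding embedding_def
proof (intro conjI ballI)
  fix e assume "e \<in> {1..k} \<times> {1..l}" then show "\<psi> e \<in> {1..m} \<times> {1..n}" using R1 by auto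
next
  fix e assume "e \<in> {1..k} \<times> {1..l}" then show "P e \<longrightarrow> M (\<psi> e)" using R2 by auto
next
  fix e1 e2 assume "e1 \<in> {1..k} \<times> {1..l}" "e2 \<in> {1..k} \<times> {1..l}"
  then show "fst e1 < fst e2 \<longrightarrow> fst (\<psi> e1) < fst (\<psi> e2)"
    using R3[of "fst e1" "snd e1" "fst e2" "snd e2"] by auto
next
  fix e1 e2 assume "e1 \<in> {1..k} \<times> {1..l}" "e2 \<in> {1..k} \<times> {1..l}"
  then show "snd e1 < snd e2 \<longrightarrow> snd (\<psi> e1) < snd (\<psi> e2)"
    using R4[of "fst e1" "snd e1" "fst e2" "snd e2"] by auto
qed

lemma key:
  assumes hyp: "\<forall>a \<in> {1..k}. \<forall>b \<in> {1..l}. P (a, b) \<longrightarrow> a = r \<or> j0 \<le> b"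
    and r: "r \<in> {1..k}" and j0: "j0 \<in> {1..l}"
    and sep1: "\<And>b. b \<in> {1..j0} \<Longrightarrow> M (i, sep b) \<and> sep b \<in> {1..n}"
    and sepm: "\<And>b1 b2. b1 \<in> {1..j0} \<Longrightarrow> b2 \<in> {1..j0} \<Longrightarrow> b1 < b2 \<Longrightarrow> sep b1 < sep b2"
    and emb: "embedding k l P m n (flip M (i,x)) \<phi>" and phie: "\<phi> (r,j0) = (i,x)"
    and x: "sep j0 < x"
  shows "\<exists>\<psi>. embedding k l P m n M \<psi>"
proof -
  have rng: "\<And>a b. a\<in>{1..k} \<Longrightarrow> b\<in>{1..l} \<Longrightarrow> \<phi> (a,b) \<in> {1..m}\<times>{1..n}"
    using emb unfolding embedding_def by blast
  have ones: "\<And>a b. a\<in>{1..k} \<Longrightarrow> b\<in>{1..l} \<Longrightarrow> P (a,b) \<Longrightarrow> flip M (i,x) (\<phi> (a,b))"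
    using emb unfolding embedding_def by blast
  have rmono: "\<And>a1 b1 a2 b2. a1 \<in> {1..k} \<Longrightarrow> b1 \<in> {1..l} \<Longrightarrow> a2 \<in> {1..k} \<Longrightarrow> b2 \<in> {1..l}
              \<Longrightarrow> a1 < a2 \<Longrightarrow> fst (\<phi> (a1,b1)) < fst (\<phi> (a2,b2))"
  proof -
    fix a1 b1 a2 b2 assume "a1 \<in> {1..k}" "b1 \<in> {1..l}" "a2 \<in> {1..k}" "b2 \<in> {1..l}" "a1 < a2"
    then show "fst (\<phi> (a1,b1)) < fst (\<phi> (a2,b2))"
      using emb unfolding embedding_def
      by (metis (no_types, lifting) SigmaI fst_conv)
  qed
  have cmono: "\<And>a1 b1 a2 b2. a1 \<in> {1..k} \<Longrightarrow> b1 \<in> {1..l} \<Longrightarrow> a2 \<in> {1..k} \<Longrightarrow> b2 \<in> {1..l}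
              \<Longrightarrow> b1 < b2 \<Longrightarrow> snd (\<phi> (a1,b1)) < snd (\<phi> (a2,b2))"
  proof -
    fix a1 b1 a2 b2 assume "a1 \<in> {1..k}" "b1 \<in> {1..l}" "a2 \<in> {1..k}" "b2 \<in> {1..l}" "b1 < b2"
    then show "snd (\<phi> (a1,b1)) < snd (\<phi> (a2,b2))"
      using emb unfolding embedding_def
      by (metis (no_types, lifting) SigmaI snd_conv)
  qed
  have oneM: "\<And>a b. a\<in>{1..k} \<Longrightarrow> b\<in>{1..l} \<Longrightarrow> P (a,b) \<Longrightarrow> (a,b) \<noteq> (r,j0) \<Longrightarrow> M (\<phi> (a,b))"
  proof -
    fix a b assume ab: "a\<in>{1..k}" "b\<in>{1..l}" "P (a,b)" "(a,b) \<noteq> (r,j0)"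
    have "\<phi> (a,b) \<noteq> (i,x)"
    proof
      assume eq: "\<phi> (a,b) = (i,x)"
      show False
      proof (cases "a = r")
        case True
        then have "b \<noteq> j0" using ab by auto
        then have "b < j0 \<or> j0 < b" by auto
        then show False
          using cmono[OF ab(1,2) r j0] cmono[OF r j0 ab(1,2)] eq phie by auto
      next
        case False
        then have "a < r \<or> r < a" by auto
        then show False
          using rmono[OF ab(1,2) r j0] rmono[OF r j0 ab(1,2)] eq phie by auto
      qed
    qed
    then show "M (\<phi> (a,b))" using ones[OF ab(1-3)] by (simp add: flip_def)
  qed
  have ix: "i \<in> {1..m}" "x \<in> {1..n}" using rng[OF r j0] phie by auto
  have j0' : "j0 \<in> {1..j0}" using j0 by auto
  let ?y = "sep j0"
  have y: "M (i, ?y)" "?y \<in> {1..n}" using sep1[OF j0'] by auto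
  show ?thesis
  proof (cases "\<forall>a\<in>{1..k}. \<forall>b\<in>{1..l}. b < j0 \<longrightarrow> snd (\<phi> (a,b)) < ?y")
    case True
    define \<psi> where "\<psi> = \<phi>((r,j0) := (i,?y))"
    have fstp: "\<And>a b. fst (\<psi> (a,b)) = fst (\<phi> (a,b))" by (simp add: \<psi>_def phie)
    have "embedding k l P m n M \<psi>"
    proof (rule emb_intro)
      fix a b assume "a \<in> {1..k}" "b \<in> {1..l}"
      then show "\<psi> (a,b) \<in> {1..m} \<times> {1..n}" using rng ix y by (auto simp: \<psi>_def)
    next
      fix a b assume "a \<in> {1..k}" "b \<in> {1..l}" "P (a,b)"
      then show "M (\<psi> (a,b))" using oneM y by (auto simp: \<psi>_def)
    next
      fix a1 b1 a2 b2 assume "a1 \<in> {1..k}" "b1 \<in> {1..l}" "a2 \<in> {1..k}" "b2 \<in> {1..l}" "a1 < a2"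
      then show "fst (\<psi> (a1,b1)) < fst (\<psi> (a2,b2))" using rmono fstp by simp
    next
      fix a1 b1 a2 b2 assume A: "a1 \<in> {1..k}" "b1 \<in> {1..l}" "a2 \<in> {1..k}" "b2 \<in> {1..l}" "b1 < b2"
      show "snd (\<psi> (a1,b1)) < snd (\<psi> (a2,b2))"
      proof (cases "(a1,b1) = (r,j0)")
        case True
        then have "(a2,b2) \<noteq> (r,j0)" using A by auto
        then show ?thesis using True cmono[OF r j0 A(3,4)] A phie x by (auto simp: \<psi>_def)
      next
        case F1: False
        show ?thesis
        proof (cases "(a2,b2) = (r,j0)")
          case True
          then show ?thesis using F1 A \<open>\<forall>a\<in>{1..k}. \<forall>b\<in>{1..l}. b < j0 \<longrightarrow> snd (\<phi> (a,b)) < ?y\<close>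
            by (auto simp: \<psi>_def)
        next
          case False
          then show ?thesis using F1 cmono[OF A] by (auto simp: \<psi>_def)
        qed
      qed
    qed
    then show ?thesis by blast
  next
    case False
    then obtain a' b' where a'b': "a' \<in> {1..k}" "b' \<in> {1..l}" "b' < j0" "?y \<le> snd (\<phi> (a',b'))"
      by auto
    define \<psi> where "\<psi> = (\<lambda>(a,b). if b < j0 then (if a = r then i else fst (\<phi> (a,b)), sep b)
                          else if (a,b) = (r,j0) then (i,?y) else \<phi> (a,b))"
    have fstp: "\<And>a b. fst (\<psi> (a,b)) = fst (\<phi> (a, if a = r \<and> b \<le> j0 then j0 else b))"
      by (auto simp: \<psi>_def phie)
    have "embedding k l P m n M \<psi>"
    proof (rule emb_intro)
      fix a b assume A: "a \<in> {1..k}" "b \<in> {1..l}"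
      show "\<psi> (a,b) \<in> {1..m} \<times> {1..n}"
      proof (cases "b < j0")
        case True
        then have "b \<in> {1..j0}" using A by auto
        then show ?thesis using True sep1 rng[OF A] ix by (auto simp: \<psi>_def)
      next
        case False
        then show ?thesis using rng[OF A] ix y by (auto simp: \<psi>_def)
      qed
    next
      fix a b assume A: "a \<in> {1..k}" "b \<in> {1..l}" "P (a,b)"
      show "M (\<psi> (a,b))"
      proof (cases "b < j0")
        case True
        have "a = r \<or> j0 \<le> b" using A hyp by blast
        then have "b \<in> {1..j0}" "a = r" using A True by auto
        then show ?thesis using True sep1 by (auto simp: \<psi>_def)
      next
        case False
        then show ?thesis using oneM[OF A] y by (auto simp: \<psi>_def)
      qed
    next
      fix a1 b1 a2 b2 assume A: "a1 \<in> {1..k}" "b1 \<in> {1..l}" "a2 \<in> {1..k}" "b2 \<in> {1..l}" "a1 < a2"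
      have "(if a1 = r \<and> b1 \<le> j0 then j0 else b1) \<in> {1..l}"
           "(if a2 = r \<and> b2 \<le> j0 then j0 else b2) \<in> {1..l}" using A j0 by auto
      then show "fst (\<psi> (a1,b1)) < fst (\<psi> (a2,b2))"
        unfolding fstp using rmono A by blast
    next
      fix a1 b1 a2 b2 assume A: "a1 \<in> {1..k}" "b1 \<in> {1..l}" "a2 \<in> {1..k}" "b2 \<in> {1..l}" "b1 < b2"
      show "snd (\<psi> (a1,b1)) < snd (\<psi> (a2,b2))"
      proof (cases "b2 < j0")
        case True
        then show ?thesis using sepm[of b1 b2] A by (auto simp: \<psi>_def)
      next
        case nb2: False
        show ?thesis
        proof (cases "b1 < j0")
          case True
          have s1: "sep b1 < ?y" using sepm[of b1 j0] A True j0 by auto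
          show ?thesis
          proof (cases "(a2,b2) = (r,j0)")
            case True
            then show ?thesis using s1 \<open>b1 < j0\<close> by (auto simp: \<psi>_def)
          next
            case False
            have "snd (\<phi> (a',b')) < snd (\<phi> (a2,b2))" using cmono[OF a'b'(1,2) A(3,4)] a'b'(3) nb2 by auto
            then show ?thesis using s1 \<open>b1 < j0\<close> False nb2 a'b'(4) by (auto simp: \<psi>_def)
          qed
        next
          case nb1: False
          show ?thesis
          proof (cases "(a1,b1) = (r,j0)")
            case True
            then show ?thesis using cmono[OF r j0 A(3,4)] A phie x nb2 by (auto simp: \<psi>_def)
          next
            case False
            then show ?thesis using cmono[OF A] A nb1 nb2 by (auto simp: \<psi>_def)
          qed
        qed
      qed
    qed
    then show ?thesis by blast
  qed
qed


lemma run_sep: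
  assumes h1: "hrun m n M i a b" and h2: "hrun m n M i a' b'" and lt: "a < a'"
  shows "a < a' - 1 \<and> M (i, a' - 1) \<and> a' - 1 \<le> n"
proof -
  have a1: "1 \<le> a" using h1 unfolding hrun_def by auto
  have "a' \<noteq> 1" using a1 lt by auto
  then have M1: "M (i, a' - 1)" using h2 unfolding hrun_def by auto
  have "\<not> M (i, a)" using h1 unfolding hrun_def by auto
  then have "a' - 1 \<noteq> a" using M1 by auto
  moreover have "a' \<le> n" using h2 unfolding hrun_def by auto
  ultimately show ?thesis using M1 lt by auto
qed

lemma run_unique_aux:
  assumes h1: "hrun m n M i a b" and h2: "hrun m n M i a b'" and lt: "b < b'"
  shows False
proof -
  have "b + 1 \<in> {a..b'}" using h1 lt unfolding hrun_def by auto
  then have "\<not> M (i, b + 1)" using h2 unfolding hrun_def by blast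
  moreover have "b \<noteq> n" using h2 lt unfolding hrun_def by auto
  ultimately show False using h1 unfolding hrun_def by auto
qed

lemma run_unique:
  assumes "hrun m n M i a b" "hrun m n M i a b'"
  shows "b = b'"
  using run_unique_aux[OF assms(1,2)] run_unique_aux[OF assms(2,1)] by fastforce

lemma main_bound:
  assumes hyp: "\<forall>a \<in> {1..k}. \<forall>b \<in> {1..l}. P (a, b) \<longrightarrow> a = r \<or> j0 \<le> b"
    and r: "r \<in> {1..k}" and j0: "j0 \<in> {1..l}"
    and av: "avoids k l P m n M"
  shows "card (critical_runs k l P (r,j0) m n M i) \<le> j0"
proof (rule ccontr)
  let ?S = "critical_runs k l P (r,j0) m n M i"
  assume "\<not> card ?S \<le> j0"
  then have cS: "j0 < card ?S" by simp
  have Ssub: "?S \<subseteq> {1..n} \<times> {1..n}" unfolding critical_runs_def hrun_def by auto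
  then have finS: "finite ?S" by (rule finite_subset) auto
  have inj: "inj_on fst ?S"
    unfolding inj_on_def critical_runs_def using run_unique by fastforce
  define A where "A = fst ` ?S"
  have finA: "finite A" using finS A_def by auto
  have cA: "card A = card ?S" using inj A_def card_image by blast
  define xs where "xs = sorted_list_of_set A"
  have lxs: "length xs = card A" using xs_def by simp
  have sxs: "sorted_wrt (<) xs" using xs_def by simp
  have setxs: "set xs = A" using xs_def finA by simp
  have memA: "\<And>p. p < length xs \<Longrightarrow> \<exists>b. hrun m n M i (xs ! p) b \<and>
      (\<exists>j \<in> {xs ! p..b}. critical_entry k l P (r,j0) m n M (i, j))"
  proof -
    fix p assume "p < length xs"
    then have "xs ! p \<in> A" using setxs nth_mem by blast
    then show "\<exists>b. hrun m n M i (xs ! p) b \<and>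
      (\<exists>j \<in> {xs ! p..b}. critical_entry k l P (r,j0) m n M (i, j))"
      unfolding A_def critical_runs_def by force
  qed
  have lt: "\<And>p q. p < q \<Longrightarrow> q < length xs \<Longrightarrow> xs ! p < xs ! q"
    using sxs sorted_wrt_nth_less by blast
  define sep where "sep = (\<lambda>p. xs ! p - 1)"
  have sep1: "\<And>b. b \<in> {1..j0} \<Longrightarrow> M (i, sep b) \<and> sep b \<in> {1..n}"
  proof -
    fix b assume b: "b \<in> {1..j0}"
    then have bl: "b < length xs" "b - 1 < b" using lxs cA cS by auto
    have bl2: "b - 1 < length xs" using bl by linarith
    obtain b1 where h1: "hrun m n M i (xs ! (b-1)) b1" using memA[OF bl2] by blast
    obtain b2 where h2: "hrun m n M i (xs ! b) b2" using memA[OF bl(1)] by blast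
    have "xs ! (b-1) < xs ! b" using lt bl by blast
    then have "xs ! (b-1) < xs ! b - 1 \<and> M (i, xs ! b - 1) \<and> xs ! b - 1 \<le> n"
      using run_sep[OF h1 h2] by blast
    then show "M (i, sep b) \<and> sep b \<in> {1..n}" unfolding sep_def by auto
  qed
  have sepm: "\<And>b1 b2. b1 \<in> {1..j0} \<Longrightarrow> b2 \<in> {1..j0} \<Longrightarrow> b1 < b2 \<Longrightarrow> sep b1 < sep b2"
  proof -
    fix b1 b2 assume "b1 \<in> {1..j0}" "b2 \<in> {1..j0}" "b1 < b2"
    moreover have "0 < sep b1" using sep1 \<open>b1 \<in> {1..j0}\<close> by fastforce
    moreover have "b2 < length xs" using \<open>b2 \<in> {1..j0}\<close> lxs cA cS by auto
    ultimately show "sep b1 < sep b2" using lt[of b1 b2] unfolding sep_def by auto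
  qed
  have jl: "j0 < length xs" using lxs cA cS by auto
  obtain bt where "hrun m n M i (xs ! j0) bt"
    and "\<exists>j \<in> {xs ! j0..bt}. critical_entry k l P (r,j0) m n M (i, j)"
    using memA[OF jl] by blast
  then obtain x where xin: "xs ! j0 \<le> x" and ce: "critical_entry k l P (r,j0) m n M (i, x)"
    by auto
  have "0 < sep j0" using sep1[of j0] j0 by fastforce
  then have x: "sep j0 < x" using xin unfolding sep_def by auto
  obtain \<phi> where emb: "embedding k l P m n (flip M (i,x)) \<phi>" and phie: "\<phi> (r,j0) = (i,x)"
    using ce unfolding critical_entry_def by blast
  have "\<exists>\<psi>. embedding k l P m n M \<psi>"
    by (rule key[where sep=sep and M=M and i=i, OF hyp r j0 sep1 sepm emb phie x])
  then show False using av unfolding avoids_def by blast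
qed

theorem lemma3p8:
  fixes k l r c :: nat and P :: bmat
  assumes "r \<in> {1..k}" and "c \<in> {1..l}"
    and "\<forall>i \<in> {1..k}. \<forall>j \<in> {1..l}. P (i, j) \<longrightarrow> i = r \<or> c \<le> j"
  shows "\<forall>j \<in> {1..c}. P (r, j) \<longrightarrow> row_bounding k l P (r, j)"
proof (intro ballI impI)
  fix j assume j: "j \<in> {1..c}" and "P (r, j)"
  have hyp: "\<forall>a \<in> {1..k}. \<forall>b \<in> {1..l}. P (a, b) \<longrightarrow> a = r \<or> j \<le> b"
    using assms(3) j by force
  have jl: "j \<in> {1..l}" using j assms(2) by auto
  show "row_bounding k l P (r, j)"
    unfolding row_bounding_def
    using main_bound[OF hyp assms(1) jl] by blast
qed

end
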